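(* Let $n\ge2$ and let $r_1,\dots,r_N$, $N=3\cdot4^{n-1}$, be the vertices of the Koch snowflake $S_n$ (indices modulo $N$). Then: (i) the sharp points of $S_n$ are exactly the vertices $r_m$ with $m=4^{l}(4k-2)+1$ for $l\in\{0,1,\dots,n-2\}$, $k\in\{1,2,\dots,3\cdot4^{\,n-2-l}\}$, or $m=4^{n-1}(k-1)+1$ for $k\in\{1,2,3\}$; (ii) for the snowflake code $u_n=c_1\cdots c_{6\cdot4^{n-2}}$ and for $S_n$ or any image of $S_n$ under an invertible affine map: if $c_j=1$ then $\kappa_{2j-2}=\kappa_{2j-1}=-1$, $\bar\kappa_{2j-2}=-1$, $\bar\kappa_{2j-1}=1$; if $c_j=0$ then $\kappa_{2j-2}=\kappa_{2j-1}=\bar\kappa_{2j-2}=\bar\kappa_{2j-1}=1$; (iii) $u_2=111111$, and if $u_n=c_1c_2\cdots c_m$ then $u_{n+1}=c_1\,101\,c_2\,101\cdots c_m\,101$ (each letter of $u_n$ followed by the word $101$); in particular $u_3=(1101)^6$ and $u_n$ has $6\cdot4^{n-2}$ letters.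
   Context: Let $R_\theta$ denote counterclockwise rotation of $\mathbb R^2$ by the angle $\theta$. Let $v_1,v_2,v_3$ be the vertices of an equilateral triangle in counterclockwise order. The Koch snowflake at step $n$ is the closed polygon $S_n$ with vertices $r_1,\dots,r_{3\cdot4^{n-1}}$ (indices taken modulo $3\cdot4^{n-1}$, so $r_0$ is the last vertex), defined recursively: $S_1$ has vertices $v_1,v_2,v_3$; $S_{n+1}$ is obtained from $S_n$ by replacing each edge from $p$ to $q$ (including the closing edge from the last vertex to $r_1$), in cyclic order, by the four edges through $p,\ p+\tfrac13(q-p),\ p+\tfrac13(q-p)+\tfrac13R_{-\pi/3}(q-p),\ p+\tfrac23(q-p),\ q$ (the new tip points outward), and numbering vertices consecutively with $r_1=v_1$. A vertex $r_i$ is a sharp point if the angle $\angle r_{i-1}r_ir_{i+1}$ equals $\pi/3$. For $n\ge2$ the snowflake code is the word $u_n=c_1\cdots c_{6\cdot4^{n-2}}$ over $\{0,1\}$ with $c_j=1$ iff $r_{2j-1}$ is a sharp point (the letter $c_j$ refers to the pair $\{r_{2j-2},r_{2j-1}\}$). Affine curvatures of a closed polygon with vertices $r_1,\dots,r_N$ (indices mod $N$): $t_k=r_{k+1}-r_k$, $[a,b]=a_1b_2-a_2b_1$, and whenever $[t_{k-1},t_k]\ne0$, $\kappa_k=\dfrac{[t_k,t_{k+1}]}{[t_{k-1},t_k]}$, $\bar\kappa_k=\dfrac{[t_{k-1},t_{k+1}]}{[t_{k-1},t_k]}$. *)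

theory Defs
  imports "HOL-Analysis.Analysis"
begin

text \<open>The plane R^2 is identified with the complex numbers (x,y) <-> x + i y.
  Counterclockwise rotation R_theta is multiplication by cis theta.\<close>

definition rot :: "real \<Rightarrow> complex \<Rightarrow> complex" where
  "rot \<theta> z = cis \<theta> * z"

definition det2 :: "complex \<Rightarrow> complex \<Rightarrow> real" where
  "det2 a b = Re a * Im b - Im a * Re b"

definition angle3 :: "complex \<Rightarrow> complex \<Rightarrow> complex \<Rightarrow> real" where
  "angle3 a b c = arccos (((a - b) \<bullet> (c - b)) / (norm (a - b) * norm (c - b)))"

definition equilateral_ccw :: "complex \<Rightarrow> complex \<Rightarrow> complex \<Rightarrow> bool" where
  "equilateral_ccw v1 v2 v3 \<longleftrightarrow> v1 \<noteq> v2 \<and> dist v1 v2 = dist v2 v3 \<and> dist v2 v3 = dist v3 v1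
     \<and> det2 (v2 - v1) (v3 - v1) > 0"

text \<open>Replace the edge p -> q by p, p+(q-p)/3, p+(q-p)/3+R_{-pi/3}((q-p)/3), p+2(q-p)/3
  (q is the first vertex of the next edge).\<close>
definition koch_edge :: "complex \<Rightarrow> complex \<Rightarrow> complex list" where
  "koch_edge p q = [p, p + (q - p) / 3, p + (q - p) / 3 + rot (- pi / 3) ((q - p) / 3),
                    p + 2 * (q - p) / 3]"

definition koch_step :: "complex list \<Rightarrow> complex list" where
  "koch_step vs = concat (map (\<lambda>i. koch_edge (vs ! i) (vs ! ((i + 1) mod length vs)))
                                [0..<length vs])"

text \<open>Vertex list r_1, ..., r_N of S_n (the list position i holds r_(i+1)); S_0 := S_1.\<close>
fun koch_list :: "complex \<Rightarrow> complex \<Rightarrow> complex \<Rightarrow> nat \<Rightarrow> complex list" where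
  "koch_list v1 v2 v3 0 = [v1, v2, v3]"
| "koch_list v1 v2 v3 (Suc 0) = [v1, v2, v3]"
| "koch_list v1 v2 v3 (Suc (Suc n)) = koch_step (koch_list v1 v2 v3 (Suc n))"

text \<open>Vertices of a closed polygon given by a list, indexed cyclically by integers, 1-based.\<close>
definition cyc :: "complex list \<Rightarrow> int \<Rightarrow> complex" where
  "cyc vs i = vs ! nat ((i - 1) mod int (length vs))"

definition koch_vertex :: "complex \<Rightarrow> complex \<Rightarrow> complex \<Rightarrow> nat \<Rightarrow> int \<Rightarrow> complex" where
  "koch_vertex v1 v2 v3 n i = cyc (koch_list v1 v2 v3 n) i"

definition sharp :: "complex \<Rightarrow> complex \<Rightarrow> complex \<Rightarrow> nat \<Rightarrow> int \<Rightarrow> bool" where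
  "sharp v1 v2 v3 n i \<longleftrightarrow>
     angle3 (koch_vertex v1 v2 v3 n (i - 1)) (koch_vertex v1 v2 v3 n i)
            (koch_vertex v1 v2 v3 n (i + 1)) = pi / 3"

definition snowflake_code :: "complex \<Rightarrow> complex \<Rightarrow> complex \<Rightarrow> nat \<Rightarrow> nat list" where
  "snowflake_code v1 v2 v3 n =
     map (\<lambda>j. if sharp v1 v2 v3 n (2 * int j - 1) then 1 else 0) [1..<6 * 4 ^ (n - 2) + 1]"

definition tvec :: "(int \<Rightarrow> complex) \<Rightarrow> int \<Rightarrow> complex" where
  "tvec P k = P (k + 1) - P k"

definition kappa :: "(int \<Rightarrow> complex) \<Rightarrow> int \<Rightarrow> real" where
  "kappa P k = det2 (tvec P k) (tvec P (k + 1)) / det2 (tvec P (k - 1)) (tvec P k)"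

definition kappa_bar :: "(int \<Rightarrow> complex) \<Rightarrow> int \<Rightarrow> real" where
  "kappa_bar P k = det2 (tvec P (k - 1)) (tvec P (k + 1)) / det2 (tvec P (k - 1)) (tvec P k)"

definition curv_defined :: "(int \<Rightarrow> complex) \<Rightarrow> int \<Rightarrow> bool" where
  "curv_defined P k \<longleftrightarrow> det2 (tvec P (k - 1)) (tvec P k) \<noteq> 0"

definition inv_affine :: "(complex \<Rightarrow> complex) \<Rightarrow> bool" where
  "inv_affine f \<longleftrightarrow> (\<exists>L c. linear L \<and> bij L \<and> f = (\<lambda>x. L x + c))"

end

theory Submission
  imports Defs
begin


lemma nth_concat4:
  assumes "\<forall>x\<in>set xs. length (f x) = 4" "i < length xs" "r < 4"
  shows "concat (map f xs) ! (4*i+r) = f (xs!i) ! r"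
  using assms
proof (induction xs arbitrary: i)
  case Nil then show ?case by simp
next
  case (Cons x xs)
  show ?case
  proof (cases i)
    case 0 then show ?thesis using Cons.prems by (simp add: nth_append)
  next
    case (Suc i')
    have "concat (map f (x#xs)) ! (4*i+r) = concat (map f xs) ! (4*i'+r)"
      using Cons.prems Suc by (simp add: nth_append)
    also have "\<dots> = f (xs!i') ! r" using Cons Suc by simp
    finally show ?thesis using Suc by simp
  qed
qed

lemma length_concat4:
  assumes "\<forall>x\<in>set xs. length (f x) = 4"
  shows "length (concat (map f xs)) = 4 * length xs"
  using assms by (induction xs) auto

fun flags :: "nat \<Rightarrow> bool list" where
  "flags 0 = [True, True, True]"
| "flags (Suc 0) = [True, True, True]"
| "flags (Suc (Suc n)) = concat (map (\<lambda>b. [b, False, True, False]) (flags (Suc n)))"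

lemma length_flags: "length (flags (Suc d)) = 3 * 4 ^ d"
  by (induction d) (auto simp: length_concat4)

lemma flags_step:
  assumes "i < 3 * 4 ^ d" "r < 4"
  shows "flags (Suc (Suc d)) ! (4*i+r) = (if r = 0 then flags (Suc d) ! i else r = 2)"
proof -
  have "flags (Suc (Suc d)) ! (4*i+r) = [flags (Suc d) ! i, False, True, False] ! r"
    using nth_concat4[of "flags (Suc d)" "\<lambda>b. [b, False, True, False]" i r] assms
    by (simp add: length_flags)
  also have "\<dots> = (if r = 0 then flags (Suc d) ! i else r = 2)"
    using assms(2) by (cases r; cases "r - 1"; cases "r - 2"; auto)
  finally show ?thesis .
qed

lemma flags_odd:
  assumes "x < 3 * 4 ^ (Suc d)" "odd x"
  shows "\<not> flags (Suc (Suc d)) ! x"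
proof -
  obtain i r where x: "x = 4*i+r" "r < 4" by (metis div_mod_decomp mod_less_divisor zero_less_numeral mult.commute)
  have i: "i < 3 * 4 ^ d" using assms x by auto
  have "r \<noteq> 0 \<and> r \<noteq> 2" using assms(2) x by presburger
  then show ?thesis using flags_step[OF i x(2)] x by simp
qed

lemma flags_char:
  "x < 3 * 4 ^ d \<Longrightarrow> flags (Suc d) ! x \<longleftrightarrow>
      ((\<exists>l<d. \<exists>k. x = 4^l * (4*k+2)) \<or> 4^d dvd x)"
proof (induction d arbitrary: x)
  case 0
  then have "x = 0 \<or> x = 1 \<or> x = 2" by auto
  then show ?case by auto
next
  case (Suc d)
  obtain i r where x: "x = 4*i+r" "r < 4" by (metis div_mod_decomp mod_less_divisor zero_less_numeral mult.commute)
  have i: "i < 3 * 4 ^ d" using Suc.prems x by auto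
  have fs: "flags (Suc (Suc d)) ! x = (if r = 0 then flags (Suc d) ! i else r = 2)"
    using flags_step[OF i x(2)] x by simp
  show ?case
  proof (cases "r = 0")
    case True
    have A: "(\<exists>l<Suc d. \<exists>k. 4*i = 4^l * (4*k+2)) \<longleftrightarrow> (\<exists>l<d. \<exists>k. i = 4^l * (4*k+2))"
    proof
      assume "\<exists>l<Suc d. \<exists>k. 4*i = 4^l * (4*k+2)"
      then obtain l k where lk: "l < Suc d" "4*i = 4^l * (4*k+2)" by blast
      show "\<exists>l<d. \<exists>k. i = 4^l * (4*k+2)"
      proof (cases l)
        case 0
        then have "4*i = 4*k+2" using lk by simp
        then have False by presburger
        then show ?thesis ..
      next
        case (Suc l') then show ?thesis using lk by (intro exI[of _ l'] conjI exI[of _ k]) auto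
      qed
    next
      assume "\<exists>l<d. \<exists>k. i = 4^l * (4*k+2)"
      then obtain l k where lk: "l < d" "i = 4^l * (4*k+2)" by blast
      then show "\<exists>l<Suc d. \<exists>k. 4*i = 4^l * (4*k+2)"
        by (intro exI[of _ "Suc l"] conjI exI[of _ k]) auto
    qed
    have B: "4^Suc d dvd 4*i \<longleftrightarrow> 4^d dvd i" by simp
    show ?thesis using fs True x A B Suc.IH[OF i] by simp
  next
    case False
    show ?thesis
    proof (cases "r = 2")
      case True
      have "x = 4^0 * (4*i+2)" using x True by simp
      then have "\<exists>l<Suc d. \<exists>k. x = 4^l * (4*k+2)" by blast
      then show ?thesis using fs True by simp
    next
      case False2: False
      have odd: "odd x" using x False False2 by presburger
      have "\<not> (\<exists>l<Suc d. \<exists>k. x = 4^l * (4*k+2))" using odd by auto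
      moreover have "\<not> 4^Suc d dvd x" using odd
        by (metis dvd_trans even_numeral dvd_power power_Suc0_right zero_less_Suc dvd_mult_left)
      ultimately show ?thesis using fs False False2 by simp
    qed
  qed
qed




definition aa :: complex where "aa = Complex (1/2) (- sqrt 3 / 2)"
definition tw :: "bool \<Rightarrow> complex" where "tw b = (if b then - aa else aa)"
definition ed :: "complex list \<Rightarrow> nat \<Rightarrow> complex" where
  "ed vs i = vs ! ((i+1) mod length vs) - vs ! i"
definition good :: "complex list \<Rightarrow> bool list \<Rightarrow> bool" where
  "good vs fl \<longleftrightarrow> length vs = length fl \<and> 0 < length vs \<and>
     (\<forall>i<length vs. ed vs i \<noteq> 0 \<and> ed vs ((i+1) mod length vs) = tw (fl ! ((i+1) mod length vs)) * ed vs i)"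

lemma sqrt3sq: "sqrt 3 * sqrt 3 = (3::real)" by simp

lemma aa_sq: "aa * aa = aa - 1"
  by (simp add: aa_def complex_eq_iff field_simps)
lemma rot_aa: "rot (- pi / 3) z = aa * z" "rot (- (pi / 3)) z = aa * z"
  by (simp_all add: rot_def aa_def complex_eq_iff sin_60 cos_60)
lemma aa_nz: "aa \<noteq> 0" by (simp add: aa_def complex_eq_iff)

lemma koch_edge_nth:
  "koch_edge p q ! 0 = p" "koch_edge p q ! 1 = p + (q - p) / 3"
  "koch_edge p q ! 2 = p + (q - p) / 3 + aa * ((q - p) / 3)"
  "koch_edge p q ! 3 = p + 2 * (q - p) / 3"
  "koch_edge p q ! Suc 0 = p + (q - p) / 3"
  "koch_edge p q ! Suc (Suc 0) = p + (q - p) / 3 + aa * ((q - p) / 3)"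
  "koch_edge p q ! Suc (Suc (Suc 0)) = p + 2 * (q - p) / 3"
  by (simp_all add: koch_edge_def rot_aa)

lemma koch_step_nth:
  assumes "i < length vs" "r < 4"
  shows "koch_step vs ! (4*i+r) = koch_edge (vs ! i) (vs ! ((i+1) mod length vs)) ! r"
  unfolding koch_step_def
  using nth_concat4[of "[0..<length vs]" "\<lambda>i. koch_edge (vs ! i) (vs ! ((i + 1) mod length vs))" i r] assms
  by (simp add: koch_edge_def)

lemma length_koch_step: "length (koch_step vs) = 4 * length vs"
  unfolding koch_step_def by (subst length_concat4) (auto simp: koch_edge_def)

lemma ed_step:
  assumes "i < length vs" "r < 4"
  shows "ed (koch_step vs) (4*i+r) = ed vs i * (if r = 1 then aa else if r = 2 then 1 - aa else 1) / 3"
proof -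
  let ?N = "length vs"
  let ?K = "koch_step vs"
  have N: "length ?K = 4 * ?N" by (rule length_koch_step)
  let ?p = "vs ! i" let ?q = "vs ! ((i+1) mod ?N)"
  have e: "ed vs i = ?q - ?p" by (simp add: ed_def)
  show ?thesis
  proof (cases "r = 3")
    case True
    have m: "(4*i+r+1) mod (4*?N) = 4 * ((i+1) mod ?N) + 0" using True
      by (simp add: mult_mod_right)
    have i1: "(i+1) mod ?N < ?N" using assms by (intro mod_less_divisor) linarith
    have "?K ! ((4*i+r+1) mod length ?K) = ?q"
      unfolding N m using koch_step_nth[OF i1, of 0] by (simp add: koch_edge_nth)
    moreover have "?K ! (4*i+r) = ?p + 2 * (?q - ?p) / 3"
      using koch_step_nth[OF assms] True by (simp add: koch_edge_nth)
    ultimately show ?thesis using True by (simp add: ed_def e field_simps)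
  next
    case False
    have m: "(4*i+r+1) mod (4*?N) = 4*i+(r+1)" using False assms by auto
    have A: "?K ! ((4*i+r+1) mod length ?K) = koch_edge ?p ?q ! (r+1)"
      unfolding N m using koch_step_nth[of i vs "r+1"] assms False by simp
    have B: "?K ! (4*i+r) = koch_edge ?p ?q ! r" using koch_step_nth[OF assms] .
    have "r = 0 \<or> r = 1 \<or> r = 2" using assms False by auto
    then show ?thesis
    proof (elim disjE)
      assume r: "r = 0"
      show ?thesis unfolding ed_def[of ?K] A B e using r by (simp add: koch_edge_nth field_simps)
    next
      assume r: "r = 1"
      show ?thesis unfolding ed_def[of ?K] A B e using r by (simp add: koch_edge_nth field_simps)
    next
      assume r: "r = 2"
      show ?thesis unfolding ed_def[of ?K] A B e using r by (simp add: koch_edge_nth field_simps)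
    qed
  qed
qed

lemma cancel3:
  fixes X Y e c1 c2 t :: complex
  assumes "X*3 = e*c1" "Y*3 = e*c2" "c1 = t*c2"
  shows "X = t*Y"
proof -
  have "X*3 = (t*Y)*3" using assms by (simp add: algebra_simps)
  then show ?thesis by simp
qed

lemma good_step:
  assumes g: "good vs fl"
  shows "good (koch_step vs) (concat (map (\<lambda>b. [b, False, True, False]) fl))"
proof -
  let ?N = "length vs"
  let ?K = "koch_step vs"
  let ?fl = "concat (map (\<lambda>b. [b, False, True, False]) fl)"
  have N: "length ?K = 4 * ?N" by (rule length_koch_step)
  have lfl: "length fl = ?N" using g by (simp add: good_def)
  have lfl': "length ?fl = 4 * ?N" using lfl by (simp add: length_concat4)
  have flnth: "?fl ! (4*i+r) = [fl!i, False, True, False] ! r" if "i < ?N" "r < 4" for i r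
    using nth_concat4[of fl "\<lambda>b. [b, False, True, False]" i r] that lfl by simp
  have sq: "aa * aa = aa - 1" by (rule aa_sq)
  have main: "ed ?K j \<noteq> 0 \<and> ed ?K ((j+1) mod length ?K) = tw (?fl ! ((j+1) mod length ?K)) * ed ?K j"
    if j: "j < length ?K" for j
  proof -
    define i where "i = j div 4"
    define r where "r = j mod 4"
    have ir: "j = 4*i+r" "r < 4" unfolding i_def r_def by auto
    have i: "i < ?N" using j ir N by auto
    have gi: "ed vs i \<noteq> 0" "ed vs ((i+1) mod ?N) = tw (fl ! ((i+1) mod ?N)) * ed vs i"
      using g i by (auto simp: good_def)
    have cnz: "(if r = 1 then aa else if r = 2 then 1 - aa else 1) \<noteq> 0"
      by (auto simp: complex_eq_iff aa_def)
    define c where "c = (if r = 1 then aa else if r = 2 then 1 - aa else 1)"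
    have ec: "ed ?K j = ed vs i * c / 3" unfolding c_def ir(1) by (rule ed_step[OF i ir(2)])
    have nz: "ed ?K j \<noteq> 0" unfolding ec using gi(1) cnz[folded c_def] by simp
    show ?thesis
    proof (cases "r = 3")
      case True
      have m: "(j+1) mod length ?K = 4 * ((i+1) mod ?N) + 0" using True ir N
        by (simp add: mult_mod_right)
      have i1: "(i+1) mod ?N < ?N" using i by (intro mod_less_divisor) linarith
      define m' where "m' = (i+1) mod ?N"
      have a1: "ed ?K (4*m'+0) = ed vs m' * 1 / 3" using ed_step[OF i1, of 0] unfolding m'_def by simp
      have a2: "ed ?K j = ed vs i * 1 / 3" using ed_step[OF i ir(2)] True ir by simp
      have a3: "?fl ! (4*m'+0) = fl ! m'" using flnth[OF i1, of 0] unfolding m'_def by simp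
      have a4: "ed vs m' = tw (fl ! m') * ed vs i" using gi(2) unfolding m'_def .
      have "ed ?K (4*m'+0) = tw (?fl ! (4*m'+0)) * ed ?K j"
        unfolding a1 a2 a3 a4 by simp
      then show ?thesis unfolding m m'_def[symmetric] using nz by simp
    next
      case False
      have m: "(j+1) mod length ?K = 4*i+(r+1)" using False ir N i by auto
      have r1: "r + 1 < 4" using False ir by auto
      have "r = 0 \<or> r = 1 \<or> r = 2" using ir False by auto
      then show ?thesis
      proof (elim disjE)
        assume r: "r = 0"
        have "ed ?K (4*i+1) = aa * ed ?K (4*i+0)"
          by (rule cancel3[where e="ed vs i" and ?c1.0="aa" and ?c2.0="1"]) (use ed_step[OF i, of 1] ed_step[OF i, of 0] in \<open>simp_all add: algebra_simps\<close>)
        then show ?thesis unfolding m using nz flnth[OF i r1] ir r by (simp add: tw_def)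
      next
        assume r: "r = 1"
        have "ed ?K (4*i+2) = (-aa) * ed ?K (4*i+1)"
          by (rule cancel3[where e="ed vs i" and ?c1.0="(1-aa)" and ?c2.0="aa"]) (use ed_step[OF i, of 2] ed_step[OF i, of 1] in \<open>simp_all add: algebra_simps sq\<close>)
        then show ?thesis unfolding m using nz flnth[OF i r1] ir r by (simp add: tw_def)
      next
        assume r: "r = 2"
        have "ed ?K (4*i+3) = aa * ed ?K (4*i+2)"
          by (rule cancel3[where e="ed vs i" and ?c1.0="1" and ?c2.0="(1-aa)"]) (use ed_step[OF i, of 3] ed_step[OF i, of 2] in \<open>simp_all add: algebra_simps sq\<close>)
        then show ?thesis unfolding m using nz flnth[OF i r1] ir r by (simp add: tw_def)
      qed
    qed
  qed
  show ?thesis unfolding good_def using main N lfl' g by (auto simp: good_def)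
qed




lemma tri_rel:
  assumes tri: "equilateral_ccw v1 v2 v3"
  shows "v3 - v1 = (1 - aa) * (v2 - v1)" "v2 - v1 \<noteq> 0"
proof -
  define p where "p = Re (v2 - v1)"
  define q where "q = Im (v2 - v1)"
  define x where "x = Re (v3 - v1)"
  define y where "y = Im (v3 - v1)"
  define N where "N = p^2 + q^2"
  have ne: "v1 \<noteq> v2" and d1: "dist v1 v2 = dist v2 v3" and d2: "dist v2 v3 = dist v3 v1"
    and dt: "det2 (v2 - v1) (v3 - v1) > 0" using tri by (auto simp: equilateral_ccw_def)
  have "(dist v1 v2)^2 = N" unfolding N_def p_def q_def
    unfolding dist_complex_def cmod_power2 by (simp add: power2_commute)
  moreover have "(dist v3 v1)^2 = x^2 + y^2" unfolding x_def y_def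
    by (simp only: dist_complex_def cmod_power2)
  moreover have "(dist v2 v3)^2 = (x-p)^2 + (y-q)^2"
  proof -
    have "(dist v2 v3)^2 = (Re (v3 - v2))^2 + (Im (v3-v2))^2"
      unfolding dist_complex_def cmod_power2 by (simp add: power2_commute)
    then show ?thesis unfolding x_def y_def p_def q_def by simp
  qed
  ultimately have e1: "x^2 + y^2 = N" and e2: "(x-p)^2 + (y-q)^2 = N" using d1 d2 by auto
  have Npos: "N > 0" unfolding N_def p_def q_def using ne
    by (metis (no_types, lifting) complex_eq_iff diff_self eq_iff_diff_eq_0 sum_power2_gt_zero_iff zero_complex.sel(1) zero_complex.sel(2))
  define s where "s = p*y - q*x"
  have spos: "s > 0" using dt unfolding s_def det2_def p_def q_def x_def y_def .
  have dot: "p*x + q*y = N/2" using e1 e2 unfolding N_def by (simp add: power2_eq_square algebra_simps)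
  have "s^2 + (p*x+q*y)^2 = N * (x^2+y^2)" unfolding s_def N_def by (simp add: power2_eq_square algebra_simps)
  then have "s^2 + (N/2)^2 = N*N" using dot e1 by simp
  then have "s^2 = N*N - (N/2)^2" by linarith
  then have s2: "s^2 = 3/4 * N^2" by (simp add: power2_eq_square field_simps)
  have "(s - sqrt 3 / 2 * N) * (s + sqrt 3 / 2 * N) = 0"
    using s2 by (simp add: power2_eq_square algebra_simps)
  moreover have "s + sqrt 3 / 2 * N > 0"
  proof -
    have "sqrt 3 / 2 * N > 0" using Npos by simp
    then show ?thesis using spos by linarith
  qed
  ultimately have sv: "s = sqrt 3 / 2 * N" by simp
  have hx: "x * N = p * (p*x+q*y) - q * s" unfolding s_def N_def by (simp add: power2_eq_square algebra_simps)
  have hy: "y * N = q * (p*x+q*y) + p * s" unfolding s_def N_def by (simp add: power2_eq_square algebra_simps)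
  have xv: "x = p/2 - q * sqrt 3 / 2"
  proof -
    have "x * N = (p/2 - q * sqrt 3 / 2) * N" using hx dot sv by (simp add: algebra_simps)
    then show ?thesis using Npos by simp
  qed
  have yv: "y = q/2 + p * sqrt 3 / 2"
  proof -
    have "y * N = (q/2 + p * sqrt 3 / 2) * N" using hy dot sv by (simp add: algebra_simps)
    then show ?thesis using Npos by simp
  qed
  have R1: "Re ((1 - aa) * (v2 - v1)) = p/2 - q * sqrt 3/2"
    unfolding p_def q_def by (simp add: aa_def field_simps)
  have R2: "Im ((1 - aa) * (v2 - v1)) = q/2 + p * sqrt 3/2"
    unfolding p_def q_def by (simp add: aa_def field_simps)
  show "v3 - v1 = (1 - aa) * (v2 - v1)"
  proof (rule complex_eqI)
    show "Re (v3 - v1) = Re ((1 - aa) * (v2 - v1))" unfolding R1 x_def[symmetric] xv ..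
    show "Im (v3 - v1) = Im ((1 - aa) * (v2 - v1))" unfolding R2 y_def[symmetric] yv ..
  qed
  show "v2 - v1 \<noteq> 0" using ne by simp
qed

lemma good_base:
  assumes tri: "equilateral_ccw v1 v2 v3"
  shows "good [v1, v2, v3] [True, True, True]"
proof -
  note r = tri_rel[OF tri]
  define d where "d = v2 - v1"
  have sq: "aa * aa = aa - 1" by (rule aa_sq)
  have sq2: "aa * (aa * z) = (aa - 1) * z" for z by (simp add: mult.assoc[symmetric] sq)
  have v2e: "v2 = v1 + d" unfolding d_def by simp
  have v3e: "v3 = v1 + (1 - aa) * d" using r(1) unfolding d_def by (simp add: algebra_simps)
  have a: "v3 - v2 = - aa * d" unfolding v3e v2e by (simp add: algebra_simps)
  have b: "v1 - v3 = - aa * (v3 - v2)" unfolding a unfolding v3e by (simp add: algebra_simps sq2)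
  have c: "v2 - v1 = - aa * (v1 - v3)" unfolding v3e v2e by (simp add: algebra_simps sq2)
  have nz: "d \<noteq> 0" "v3 - v2 \<noteq> 0" "v1 - v3 \<noteq> 0"
    using r(2) a b aa_nz unfolding d_def by auto
  have "\<forall>i<3. ed [v1,v2,v3] i \<noteq> 0 \<and> ed [v1,v2,v3] ((i+1) mod 3) = tw True * ed [v1,v2,v3] i"
  proof (intro allI impI)
    fix i :: nat assume "i < 3"
    then have "i = 0 \<or> i = 1 \<or> i = 2" by auto
    then show "ed [v1,v2,v3] i \<noteq> 0 \<and> ed [v1,v2,v3] ((i+1) mod 3) = tw True * ed [v1,v2,v3] i"
      using a b c nz unfolding d_def by (auto simp: ed_def tw_def)
  qed
  moreover have "[True,True,True] ! ((i+1) mod 3) = True" for i :: nat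
  proof -
    have "(i+1) mod 3 < 3" by simp
    then have "(i+1) mod 3 = 0 \<or> (i+1) mod 3 = 1 \<or> (i+1) mod 3 = 2" by linarith
    then show ?thesis by auto
  qed
  moreover have "length [v1,v2,v3] = 3" "length [True,True,True] = 3" by simp_all
  ultimately show ?thesis unfolding good_def by simp
qed

lemma good_koch:
  assumes tri: "equilateral_ccw v1 v2 v3"
  shows "good (koch_list v1 v2 v3 (Suc d)) (flags (Suc d))"
proof (induction d)
  case 0 then show ?case using good_base[OF tri] by simp
next
  case (Suc d) then show ?case using good_step by simp
qed




lemma nat_mod_succ:
  assumes "0 < N"
  shows "(nat ((k - 1) mod int N) + 1) mod N = nat (k mod int N)"
proof -
  have nn: "0 \<le> (k - 1) mod int N" using assms by simp
  have "int ((nat ((k - 1) mod int N) + 1) mod N) = (((k - 1) mod int N) + 1) mod int N"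
    using nn by (simp add: of_nat_mod add.commute)
  also have "\<dots> = (k - 1 + 1) mod int N" by (simp add: mod_add_left_eq)
  also have "\<dots> = k mod int N" by simp
  finally show ?thesis by (metis nat_int)
qed

lemma nat_mod_lt: "0 < N \<Longrightarrow> nat (k mod int N) < N"
  by (simp add: nat_less_iff)

lemma cyc_edge:
  assumes g: "good vs fl"
  shows "cyc vs (k+1) - cyc vs k = ed vs (nat ((k-1) mod int (length vs)))"
proof -
  have N: "0 < length vs" using g unfolding good_def by blast
  show ?thesis unfolding cyc_def ed_def nat_mod_succ[OF N] by simp
qed

lemma cyc_turn:
  assumes g: "good vs fl"
  shows "cyc vs (k+1) - cyc vs k \<noteq> 0"
    "cyc vs (k+1) - cyc vs k = tw (fl ! nat ((k-1) mod int (length vs))) * (cyc vs k - cyc vs (k-1))"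
proof -
  have N: "0 < length vs" using g unfolding good_def by blast
  let ?N = "length vs"
  define j where "j = nat ((k-1) mod int ?N)"
  define j' where "j' = nat ((k-1-1) mod int ?N)"
  have jl: "j < ?N" "j' < ?N" unfolding j_def j'_def using N by (simp_all add: nat_less_iff)
  have e1: "cyc vs (k+1) - cyc vs k = ed vs j" unfolding j_def by (rule cyc_edge[OF g])
  have e2: "cyc vs k - cyc vs (k-1) = ed vs j'" unfolding j'_def using cyc_edge[OF g, of "k-1"] by simp
  have jj: "(j'+1) mod ?N = j" unfolding j_def j'_def by (rule nat_mod_succ[OF N])
  have gj: "ed vs j \<noteq> 0" "ed vs ((j'+1) mod ?N) = tw (fl ! ((j'+1) mod ?N)) * ed vs j'"
    using g jl by (auto simp: good_def)
  show "cyc vs (k+1) - cyc vs k \<noteq> 0" using e1 gj by simp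
  show "cyc vs (k+1) - cyc vs k = tw (fl ! nat ((k-1) mod int (length vs))) * (cyc vs k - cyc vs (k-1))"
    using e1 e2 gj(2) unfolding jj j_def[symmetric] by simp
qed

lemma cmod_tw: "cmod (tw b) = 1"
  by (simp add: tw_def aa_def cmod_def power2_eq_square)

lemma angle_core:
  assumes "e \<noteq> 0"
  shows "angle3 (b - e) b (b + tw bb * e) = (if bb then pi/3 else 2*pi/3)"
proof -
  have ne: "cmod e * cmod e = (Re e)^2 + (Im e)^2" by (simp add: cmod_power2 power2_eq_square[symmetric])
  have pos: "(Re e)^2 + (Im e)^2 > 0" using assms by (simp add: complex_eq_iff sum_power2_gt_zero_iff)
  have nt: "cmod (tw bb * e) = cmod e" by (simp add: norm_mult cmod_tw)
  have inn: "(- e) \<bullet> (tw bb * e) = (if bb then 1/2 else -(1/2)) * ((Re e)^2 + (Im e)^2)"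
    by (simp add: inner_complex_def tw_def aa_def power2_eq_square algebra_simps)
  have "((b - e) - b) \<bullet> ((b + tw bb * e) - b) / (norm ((b - e) - b) * norm ((b + tw bb * e) - b))
        = ((if bb then 1/2 else -(1/2)) * ((Re e)^2 + (Im e)^2)) / ((Re e)^2 + (Im e)^2)"
    using inn nt ne by simp
  also have "\<dots> = (if bb then 1/2 else -(1/2))" by (rule nonzero_mult_div_cancel_right) (use pos in linarith)
  finally have "((b - e) - b) \<bullet> ((b + tw bb * e) - b) / (norm ((b - e) - b) * norm ((b + tw bb * e) - b))
        = (if bb then 1/2 else -(1/2))" .
  then show ?thesis unfolding angle3_def by simp
qed

lemma det2_mult: "det2 x (c * x) = (cmod x)^2 * Im c"
  by (simp only: cmod_power2) (simp add: det2_def algebra_simps power2_eq_square)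

lemma Im_tw: "Im (tw b) = (if b then sqrt 3 / 2 else - sqrt 3 / 2)"
  by (simp add: tw_def aa_def)

lemma Im_tw2: "Im (tw b' * tw b) = (if b = b' then - sqrt 3 / 2 else sqrt 3 / 2)"
  by (auto simp: tw_def aa_def)

lemma curv_alg:
  assumes "e \<noteq> 0" "\<delta> \<noteq> 0"
  shows "\<delta> * det2 e (tw b * e) \<noteq> 0"
    "(\<delta> * det2 (tw b * e) (tw b' * (tw b * e))) / (\<delta> * det2 e (tw b * e)) = (if b = b' then 1 else -1)"
    "(\<delta> * det2 e (tw b' * (tw b * e))) / (\<delta> * det2 e (tw b * e)) = (if b' then -1 else 1)"
proof -
  have c: "(cmod e)^2 > 0" using assms by simp
  have nt: "cmod (tw b * e) = cmod e" by (simp add: norm_mult cmod_tw)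
  have d1: "det2 e (tw b * e) = (cmod e)^2 * Im (tw b)" by (rule det2_mult)
  have d2: "det2 (tw b * e) (tw b' * (tw b * e)) = (cmod e)^2 * Im (tw b')" using det2_mult nt by metis
  have d3: "det2 e (tw b' * (tw b * e)) = (cmod e)^2 * Im (tw b' * tw b)"
    using det2_mult[of e "tw b' * tw b"] by (simp add: mult.assoc)
  show "\<delta> * det2 e (tw b * e) \<noteq> 0" unfolding d1 Im_tw using assms c by simp
  show "(\<delta> * det2 (tw b * e) (tw b' * (tw b * e))) / (\<delta> * det2 e (tw b * e)) = (if b = b' then 1 else -1)"
    unfolding d1 d2 Im_tw using assms c by (cases b; cases b'; simp)
  show "(\<delta> * det2 e (tw b' * (tw b * e))) / (\<delta> * det2 e (tw b * e)) = (if b' then -1 else 1)"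
    unfolding d1 d3 Im_tw Im_tw2 using assms c by (cases b; cases b'; simp)
qed

lemma det2_linear:
  assumes "linear L"
  shows "det2 (L x) (L y) = det2 (L 1) (L \<i>) * det2 x y"
proof -
  have dx: "x = Re x *\<^sub>R 1 + Im x *\<^sub>R \<i>" for x :: complex by (simp add: complex_eq_iff)
  have Lx: "L x = Re x *\<^sub>R L 1 + Im x *\<^sub>R L \<i>" for x
    by (subst dx) (simp add: linear_add[OF assms] linear_scale[OF assms])
  show ?thesis unfolding Lx[of x] Lx[of y] det2_def by (simp add: algebra_simps)
qed

lemma det2_bij:
  assumes "linear L" "bij L"
  shows "det2 (L 1) (L \<i>) \<noteq> 0"
proof
  assume h: "det2 (L 1) (L \<i>) = 0"
  let ?u = "L 1" let ?w = "L \<i>"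
  have Lx: "L (a *\<^sub>R 1 + b *\<^sub>R \<i>) = a *\<^sub>R ?u + b *\<^sub>R ?w" for a b
    by (simp add: linear_add[OF assms(1)] linear_scale[OF assms(1)])
  have inj: "L z = 0 \<Longrightarrow> z = 0" for z
    using assms linear_0[OF assms(1)] by (metis bij_def injD)
  have k1: "L (Re ?w *\<^sub>R 1 + (- Re ?u) *\<^sub>R \<i>) = 0"
    unfolding Lx using h by (simp add: complex_eq_iff det2_def algebra_simps)
  have k2: "L (Im ?w *\<^sub>R 1 + (- Im ?u) *\<^sub>R \<i>) = 0"
    unfolding Lx using h by (simp add: complex_eq_iff det2_def algebra_simps)
  have "Re ?w = 0 \<and> Re ?u = 0" using inj[OF k1] by (simp add: complex_eq_iff)
  moreover have "Im ?w = 0 \<and> Im ?u = 0" using inj[OF k2] by (simp add: complex_eq_iff)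
  ultimately have "?u = 0" by (simp add: complex_eq_iff)
  then have "(1::complex) = 0" using inj by blast
  then show False by simp
qed




lemma length_koch:
  assumes tri: "equilateral_ccw v1 v2 v3"
  shows "length (koch_list v1 v2 v3 (Suc d)) = 3 * 4 ^ d"
  using good_koch[OF tri, of d] length_flags[of d] unfolding good_def by simp

lemma sharp_iff:
  assumes tri: "equilateral_ccw v1 v2 v3"
  shows "sharp v1 v2 v3 (Suc d) i \<longleftrightarrow> flags (Suc d) ! nat ((i-1) mod int (3 * 4 ^ d))"
proof -
  let ?vs = "koch_list v1 v2 v3 (Suc d)"
  have g: "good ?vs (flags (Suc d))" by (rule good_koch[OF tri])
  have N: "length ?vs = 3 * 4 ^ d" by (rule length_koch[OF tri])
  define e where "e = cyc ?vs i - cyc ?vs (i-1)"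
  define b where "b = flags (Suc d) ! nat ((i-1) mod int (3 * 4 ^ d))"
  have ne: "e \<noteq> 0" using cyc_turn(1)[OF g, of "i-1"] unfolding e_def by simp
  have t: "cyc ?vs (i+1) - cyc ?vs i = tw b * e" using cyc_turn(2)[OF g, of i] unfolding e_def b_def N .
  have a: "cyc ?vs (i-1) = cyc ?vs i - e" unfolding e_def by simp
  have c: "cyc ?vs (i+1) = cyc ?vs i + tw b * e" using t by (simp add: algebra_simps)
  have "sharp v1 v2 v3 (Suc d) i \<longleftrightarrow> (if b then pi/3 else 2*pi/3) = pi/3"
    unfolding sharp_def koch_vertex_def a c angle_core[OF ne] ..
  also have "\<dots> \<longleftrightarrow> b" using pi_gt_zero by auto
  finally show ?thesis unfolding b_def .
qed

lemma curv:
  fixes d :: nat and k :: int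
  assumes tri: "equilateral_ccw v1 v2 v3" and f: "inv_affine f"
  defines "P \<equiv> (\<lambda>i. f (koch_vertex v1 v2 v3 (Suc d) i))"
  defines "\<sigma> \<equiv> (\<lambda>k. flags (Suc d) ! nat ((k-1) mod int (3 * 4 ^ d)))"
  shows "curv_defined P k \<and> kappa P k = (if \<sigma> k = \<sigma> (k+1) then 1 else -1)
         \<and> kappa_bar P k = (if \<sigma> (k+1) then -1 else 1)"
proof -
  let ?vs = "koch_list v1 v2 v3 (Suc d)"
  have g: "good ?vs (flags (Suc d))" by (rule good_koch[OF tri])
  have N: "length ?vs = 3 * 4 ^ d" by (rule length_koch[OF tri])
  obtain L c where L: "linear L" "bij L" and fe: "f = (\<lambda>x. L x + c)"
    using f unfolding inv_affine_def by blast
  define \<delta> where "\<delta> = det2 (L 1) (L \<i>)"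
  have dnz: "\<delta> \<noteq> 0" unfolding \<delta>_def by (rule det2_bij[OF L])
  define E where "E = (\<lambda>k. cyc ?vs (k+1) - cyc ?vs k)"
  have T: "tvec P j = L (E j)" for j
    unfolding tvec_def P_def fe koch_vertex_def E_def by (simp add: linear_diff[OF L(1)])
  have D: "det2 (tvec P a) (tvec P b) = \<delta> * det2 (E a) (E b)" for a b
    unfolding T \<delta>_def by (rule det2_linear[OF L(1)])
  define e where "e = E (k-1)"
  have ne: "e \<noteq> 0" using cyc_turn(1)[OF g, of "k-1"] unfolding e_def E_def by simp
  have Ek: "E k = tw (\<sigma> k) * e" using cyc_turn(2)[OF g, of k] unfolding e_def E_def \<sigma>_def N by simp
  have Ek1: "E (k+1) = tw (\<sigma> (k+1)) * (tw (\<sigma> k) * e)"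
    using cyc_turn(2)[OF g, of "k+1"] unfolding Ek[symmetric] unfolding E_def \<sigma>_def N by simp
  note ca = curv_alg(1)[OF ne dnz, where b="\<sigma> k"]
    curv_alg(2)[OF ne dnz, where b="\<sigma> k" and b'="\<sigma> (k+1)"]
    curv_alg(3)[OF ne dnz, where b="\<sigma> k" and b'="\<sigma> (k+1)"]
  have km1: "k - 1 + 1 = k" by simp
  show ?thesis
    unfolding curv_defined_def kappa_def kappa_bar_def D
    unfolding e_def[symmetric] km1 Ek Ek1 using ca by simp
qed




lemma char_convA:
  fixes x d :: nat
  assumes "x < 3 * 4 ^ (Suc d)"
  shows "(\<exists>l<Suc d. \<exists>k. x = 4^l * (4*k+2)) \<longleftrightarrow>
         (\<exists>l k. l \<le> Suc (Suc d) - 2 \<and> 1 \<le> k \<and> k \<le> 3 * 4 ^ (Suc (Suc d) - 2 - l) \<and> x + 1 = 4 ^ l * (4 * k - 2) + 1)"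
proof
  assume "\<exists>l<Suc d. \<exists>k. x = 4^l * (4*k+2)"
  then obtain l k :: nat where lk: "l < Suc d" "x = 4^l * (4*k+2)" by blast
  define M where "M = (4::nat) ^ (d - l)"
  have e: "Suc d = l + Suc (d - l)" using lk(1) by simp
  have p: "(4::nat) ^ Suc d = 4 ^ l * (4 * M)" unfolding M_def
    by (subst e, subst power_add) simp
  have "4^l * (4*k+2) < 4^l * (12 * M)" using assms lk(2) p by simp
  then have "4*k+2 < 12 * M" by (rule mult_less_cancel1[THEN iffD1, THEN conjunct2])
  then have kb: "k + 1 \<le> 3 * M" by linarith
  show "\<exists>l k. l \<le> Suc (Suc d) - 2 \<and> 1 \<le> k \<and> k \<le> 3 * 4 ^ (Suc (Suc d) - 2 - l) \<and> x + 1 = 4 ^ l * (4 * k - 2) + 1"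
    using lk kb unfolding M_def by (intro exI[of _ l] exI[of _ "k+1"]) auto
next
  assume "\<exists>l k. l \<le> Suc (Suc d) - 2 \<and> 1 \<le> k \<and> k \<le> 3 * 4 ^ (Suc (Suc d) - 2 - l) \<and> x + 1 = 4 ^ l * (4 * k - 2) + 1"
  then obtain l k where lk: "l \<le> d" "1 \<le> k" "x + 1 = 4 ^ l * (4 * k - 2) + 1" by auto
  have "4 * k - 2 = 4 * (k-1) + 2" using lk(2) by simp
  then show "\<exists>l<Suc d. \<exists>k. x = 4^l * (4*k+2)" using lk by (intro exI[of _ l] conjI exI[of _ "k-1"]) auto
qed

lemma char_convB:
  assumes "x < 3 * 4 ^ D"
  shows "(4::nat)^D dvd x \<longleftrightarrow> (\<exists>k\<in>{1, 2, 3}. x + 1 = 4 ^ D * (k - 1) + 1)"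
proof
  assume "4^D dvd x"
  then obtain c where c: "x = 4^D * c" by blast
  have "c < 3" using assms c by simp
  then have "c = 0 \<or> c = 1 \<or> c = 2" by auto
  then show "\<exists>k\<in>{1, 2, 3}. x + 1 = 4 ^ D * (k - 1) + 1" using c by auto
next
  assume "\<exists>k\<in>{1, 2, 3}. x + 1 = 4 ^ D * (k - 1) + 1"
  then show "4^D dvd x" by auto
qed

lemma odd_mod:
  assumes "even N" "0 < N" "odd (m::int)"
  shows "odd (nat (m mod int N))"
proof -
  have "(m mod int N) mod 2 = m mod 2" using assms(1) by (simp add: mod_mod_cancel)
  then have "odd (m mod int N)" using assms(3) by (simp add: odd_iff_mod_2_eq_one)
  moreover have "0 \<le> m mod int N" using assms(2) by simp
  ultimately show ?thesis by (simp add: even_nat_iff)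
qed




lemma code_eq:
  assumes tri: "equilateral_ccw v1 v2 v3"
  shows "snowflake_code v1 v2 v3 (Suc (Suc d)) =
         map (\<lambda>j. if flags (Suc (Suc d)) ! (2*j-2) then 1 else 0) [1..<6 * 4 ^ d + 1]"
proof -
  have "sharp v1 v2 v3 (Suc (Suc d)) (2 * int j - 1) \<longleftrightarrow> flags (Suc (Suc d)) ! (2*j-2)"
    if j: "j \<in> set [1..<6 * 4 ^ d + 1]" for j
  proof -
    have j1: "1 \<le> j" "j \<le> 6 * 4 ^ d" using j by auto
    have jb: "int j \<le> int (6 * 4 ^ d)" using j1 by linarith
    have "(2 * int j - 1 - 1) mod int (3 * 4 ^ Suc d) = 2 * int j - 1 - 1"
      by (rule mod_pos_pos_trivial) (use j1 jb in simp_all)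
    also have "\<dots> = 2 * int j - 2" by simp
    also have "\<dots> = int (2*j-2)" using j1 by (simp add: of_nat_diff)
    finally have "(2 * int j - 1 - 1) mod int (3 * 4 ^ Suc d) = int (2*j-2)" .
    then show ?thesis unfolding sharp_iff[OF tri] by simp
  qed
  then show ?thesis unfolding snowflake_code_def by (intro map_cong) auto
qed

lemma code_nth:
  assumes tri: "equilateral_ccw v1 v2 v3" and j: "1 \<le> j" "j \<le> 6 * 4 ^ d"
  shows "snowflake_code v1 v2 v3 (Suc (Suc d)) ! (j-1) = (if flags (Suc (Suc d)) ! (2*j-2) then 1 else 0)"
  unfolding code_eq[OF tri] using j by (simp del: flags.simps upt_Suc add: nth_upt)




lemma partI:
  assumes tri: "equilateral_ccw v1 v2 v3" and n: "n \<ge> 2" and m: "1 \<le> m" "m \<le> 3 * 4 ^ (n - 1)"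
  shows "sharp v1 v2 v3 n (int m) \<longleftrightarrow>
          (\<exists>l k. l \<le> n - 2 \<and> 1 \<le> k \<and> k \<le> 3 * 4 ^ (n - 2 - l) \<and> m = 4 ^ l * (4 * k - 2) + 1)
          \<or> (\<exists>k\<in>{1, 2, 3}. m = 4 ^ (n - 1) * (k - 1) + 1)"
proof -
  obtain d where nd: "n = Suc (Suc d)" using n by (metis add_2_eq_Suc le_Suc_ex)
  define x where "x = m - 1"
  have mx: "m = x + 1" using m unfolding x_def by simp
  have xl: "x < 3 * 4 ^ Suc d" using m unfolding x_def nd by simp
  have i1: "int m - 1 = int x" unfolding mx by simp
  have "int x mod int (3 * 4 ^ Suc d) = int x"
    by (rule mod_pos_pos_trivial) (use xl in \<open>simp_all only: of_nat_less_iff of_nat_0_le_iff\<close>)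
  then have "(int m - 1) mod int (3 * 4 ^ Suc d) = int x" unfolding i1 .
  then have s: "sharp v1 v2 v3 n (int m) \<longleftrightarrow> flags (Suc (Suc d)) ! x"
    unfolding nd sharp_iff[OF tri] by simp
  show ?thesis
    unfolding s flags_char[OF xl] char_convA[OF xl] char_convB[OF xl] unfolding mx nd by simp
qed

lemma inv_aff_id: "inv_affine id"
  unfolding inv_affine_def by (intro exI[of _ id] exI[of _ 0]) (auto simp: linear_id)

lemma partII:
  assumes tri: "equilateral_ccw v1 v2 v3" and n: "n \<ge> 2" and f: "f = id \<or> inv_affine f"
  shows "(let P = (\<lambda>i. f (koch_vertex v1 v2 v3 n i)); u = snowflake_code v1 v2 v3 n in
           \<forall>j::nat. 1 \<le> j \<and> j \<le> length u \<longrightarrow>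
             (u ! (j - 1) = 1 \<longrightarrow>
                curv_defined P (2 * int j - 2) \<and> curv_defined P (2 * int j - 1)
                \<and> kappa P (2 * int j - 2) = -1 \<and> kappa P (2 * int j - 1) = -1
                \<and> kappa_bar P (2 * int j - 2) = -1 \<and> kappa_bar P (2 * int j - 1) = 1)
             \<and> (u ! (j - 1) = 0 \<longrightarrow>
                curv_defined P (2 * int j - 2) \<and> curv_defined P (2 * int j - 1)
                \<and> kappa P (2 * int j - 2) = 1 \<and> kappa P (2 * int j - 1) = 1
                \<and> kappa_bar P (2 * int j - 2) = 1 \<and> kappa_bar P (2 * int j - 1) = 1))"
proof -
  obtain d where nd: "n = Suc (Suc d)" using n by (metis add_2_eq_Suc le_Suc_ex)
  have fa: "inv_affine f" using f inv_aff_id by auto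
  define P where "P = (\<lambda>i. f (koch_vertex v1 v2 v3 n i))"
  define u where "u = snowflake_code v1 v2 v3 n"
  define \<sigma> where "\<sigma> = (\<lambda>k. flags (Suc (Suc d)) ! nat ((k-1) mod int (3 * 4 ^ Suc d)))"
  have lu: "length u = 6 * 4 ^ d" unfolding u_def snowflake_code_def nd by simp
  have C: "curv_defined P k \<and> kappa P k = (if \<sigma> k = \<sigma> (k+1) then 1 else -1)
         \<and> kappa_bar P k = (if \<sigma> (k+1) then -1 else 1)" for k
    using curv[OF tri fa, of "Suc d" k] unfolding P_def \<sigma>_def nd by simp
  have odd0: "\<not> \<sigma> k" if "odd (k - 1)" for k
  proof -
    have N: "even (3 * 4 ^ Suc d :: nat)" "0 < (3 * 4 ^ Suc d :: nat)" by simp_all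
    have o: "odd (nat ((k-1) mod int (3 * 4 ^ Suc d)))" by (rule odd_mod[OF N that])
    have l: "nat ((k-1) mod int (3 * 4 ^ Suc d)) < 3 * 4 ^ Suc d" by (rule nat_mod_lt) simp
    show ?thesis unfolding \<sigma>_def using flags_odd[OF l o] .
  qed
  have \<sigma>A: "\<not> \<sigma> (2 * int j - 2)" for j :: nat by (rule odd0) presburger
  have \<sigma>B: "\<not> \<sigma> (2 * int j - 1 + 1)" for j :: nat by (rule odd0) presburger
  have \<sigma>C: "\<sigma> (2 * int j - 2 + 1) = \<sigma> (2 * int j - 1)" for j :: nat
    by (rule arg_cong[of _ _ \<sigma>]) simp
  have U: "u ! (j - 1) = (if \<sigma> (2 * int j - 1) then 1 else 0)" if j: "1 \<le> j" "j \<le> length u" for j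
  proof -
    have "u ! (j - 1) = (if sharp v1 v2 v3 n (2 * int j - 1) then 1 else 0)"
      using j lu unfolding u_def snowflake_code_def nd by (simp add: nth_upt del: upt_Suc)
    then show ?thesis unfolding nd sharp_iff[OF tri] \<sigma>_def by simp
  qed
  show ?thesis
    unfolding Let_def P_def[symmetric] u_def[symmetric]
  proof (intro allI impI)
    fix j :: nat assume j: "1 \<le> j \<and> j \<le> length u"
    note Uj = U[of j] C[of "2 * int j - 2"] C[of "2 * int j - 1"] \<sigma>A[of j] \<sigma>B[of j] \<sigma>C[of j]
    show "(u ! (j - 1) = 1 \<longrightarrow>
                curv_defined P (2 * int j - 2) \<and> curv_defined P (2 * int j - 1)
                \<and> kappa P (2 * int j - 2) = -1 \<and> kappa P (2 * int j - 1) = -1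
                \<and> kappa_bar P (2 * int j - 2) = -1 \<and> kappa_bar P (2 * int j - 1) = 1)
             \<and> (u ! (j - 1) = 0 \<longrightarrow>
                curv_defined P (2 * int j - 2) \<and> curv_defined P (2 * int j - 1)
                \<and> kappa P (2 * int j - 2) = 1 \<and> kappa P (2 * int j - 1) = 1
                \<and> kappa_bar P (2 * int j - 2) = 1 \<and> kappa_bar P (2 * int j - 1) = 1)"
      using Uj j by (cases "\<sigma> (2 * int j - 1)") simp_all
  qed
qed




lemma u2:
  assumes tri: "equilateral_ccw v1 v2 v3"
  shows "snowflake_code v1 v2 v3 2 = [1, 1, 1, 1, 1, 1]"
proof -
  have "snowflake_code v1 v2 v3 2 = snowflake_code v1 v2 v3 (Suc (Suc 0))" by (simp add: numeral_2_eq_2)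
  also have "\<dots> = map (\<lambda>j. if flags (Suc (Suc 0)) ! (2*j-2) then 1 else 0) [1..<7]"
    unfolding code_eq[OF tri] by simp
  also have "\<dots> = [1, 1, 1, 1, 1, 1]" by (simp add: upt_rec)
  finally show ?thesis .
qed

lemma urec:
  assumes tri: "equilateral_ccw v1 v2 v3" and n: "n \<ge> 2"
  shows "snowflake_code v1 v2 v3 (Suc n) = concat (map (\<lambda>c. [c, 1, 0, 1]) (snowflake_code v1 v2 v3 n))"
proof -
  obtain d where nd: "n = Suc (Suc d)" using n by (metis add_2_eq_Suc le_Suc_ex)
  let ?g = "\<lambda>j. if flags (Suc (Suc d)) ! (2*j-2) then 1 else (0::nat)"
  let ?g' = "\<lambda>j. if flags (Suc (Suc (Suc d))) ! (2*j-2) then 1 else (0::nat)"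
  have A: "snowflake_code v1 v2 v3 (Suc n) = map ?g' [1..<6 * 4 ^ Suc d + 1]"
    unfolding nd using code_eq[OF tri, of "Suc d"] by simp
  have B: "snowflake_code v1 v2 v3 n = map ?g [1..<6 * 4 ^ d + 1]"
    unfolding nd by (rule code_eq[OF tri])
  have l4: "\<forall>x\<in>set (map ?g [1..<6 * 4 ^ d + 1]). length ((\<lambda>c. [c, 1, 0, 1]) x) = 4" by simp
  show ?thesis unfolding A B
  proof (rule nth_equalityI)
    show "length (map ?g' [1..<6 * 4 ^ Suc d + 1]) = length (concat (map (\<lambda>c. [c, 1, 0, 1]) (map ?g [1..<6 * 4 ^ d + 1])))"
      using length_concat4[OF l4] by simp
  next
    fix p assume "p < length (map ?g' [1..<6 * 4 ^ Suc d + 1])"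
    then have p: "p < 24 * 4 ^ d" by simp
    define q where "q = p div 4"
    define r where "r = p mod 4"
    have pq: "p = 4*q+r" "r < 4" unfolding q_def r_def by auto
    have q: "q < 6 * 4 ^ d" using p pq by linarith
    have R: "concat (map (\<lambda>c. [c, 1, 0, 1]) (map ?g [1..<6 * 4 ^ d + 1])) ! p = [?g (q+1), 1, 0, 1] ! r"
      unfolding pq(1) using nth_concat4[OF l4, of q r] q pq(2) by (simp add: nth_upt del: upt_Suc)
    have L: "map ?g' [1..<6 * 4 ^ Suc d + 1] ! p = ?g' (p+1)"
      using p by (simp add: nth_upt del: upt_Suc flags.simps)
    have q2: "2*q < 3 * 4 ^ Suc d" "2*q+1 < 3 * 4 ^ Suc d" using q by simp_all
    have fo: "\<not> flags (Suc (Suc d)) ! (2*q+1)" by (rule flags_odd) (use q in simp_all)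
    have "r = 0 \<or> r = 1 \<or> r = 2 \<or> r = 3" using pq by auto
    then have "?g' (p+1) = [?g (q+1), 1, 0, 1] ! r"
    proof (elim disjE)
      assume r: "r = 0"
      have "2*(p+1)-2 = 4*(2*q)+0" using pq r by simp
      then show ?thesis using flags_step[OF q2(1), of 0] r by (simp del: flags.simps)
    next
      assume r: "r = 1"
      have "2*(p+1)-2 = 4*(2*q)+2" using pq r by simp
      then show ?thesis using flags_step[OF q2(1), of 2] r by (simp del: flags.simps)
    next
      assume r: "r = 2"
      have "2*(p+1)-2 = 4*(2*q+1)+0" using pq r by simp
      then show ?thesis using flags_step[OF q2(2), of 0] r fo by (simp del: flags.simps)
    next
      assume r: "r = 3"
      have "2*(p+1)-2 = 4*(2*q+1)+2" using pq r by simp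
      then show ?thesis using flags_step[OF q2(2), of 2] r by (simp del: flags.simps)
    qed
    then show "map ?g' [1..<6 * 4 ^ Suc d + 1] ! p = concat (map (\<lambda>c. [c, 1, 0, 1]) (map ?g [1..<6 * 4 ^ d + 1])) ! p"
      unfolding L R .
  qed
qed


theorem mainTheorem6:
  fixes v1 v2 v3 :: complex
  assumes tri: "equilateral_ccw v1 v2 v3"
  shows
    "(\<forall>n\<ge>2. \<forall>m::nat. 1 \<le> m \<and> m \<le> 3 * 4 ^ (n - 1) \<longrightarrow>
        (sharp v1 v2 v3 n (int m) \<longleftrightarrow>
          (\<exists>l k. l \<le> n - 2 \<and> 1 \<le> k \<and> k \<le> 3 * 4 ^ (n - 2 - l) \<and> m = 4 ^ l * (4 * k - 2) + 1)
          \<or> (\<exists>k\<in>{1, 2, 3}. m = 4 ^ (n - 1) * (k - 1) + 1)))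
     \<and> (\<forall>n\<ge>2. \<forall>f. f = id \<or> inv_affine f \<longrightarrow>
          (let P = (\<lambda>i. f (koch_vertex v1 v2 v3 n i)); u = snowflake_code v1 v2 v3 n in
           \<forall>j::nat. 1 \<le> j \<and> j \<le> length u \<longrightarrow>
             (u ! (j - 1) = 1 \<longrightarrow>
                curv_defined P (2 * int j - 2) \<and> curv_defined P (2 * int j - 1)
                \<and> kappa P (2 * int j - 2) = -1 \<and> kappa P (2 * int j - 1) = -1
                \<and> kappa_bar P (2 * int j - 2) = -1 \<and> kappa_bar P (2 * int j - 1) = 1)
             \<and> (u ! (j - 1) = 0 \<longrightarrow>
                curv_defined P (2 * int j - 2) \<and> curv_defined P (2 * int j - 1)
                \<and> kappa P (2 * int j - 2) = 1 \<and> kappa P (2 * int j - 1) = 1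
                \<and> kappa_bar P (2 * int j - 2) = 1 \<and> kappa_bar P (2 * int j - 1) = 1)))
     \<and> snowflake_code v1 v2 v3 2 = [1, 1, 1, 1, 1, 1]
     \<and> (\<forall>n\<ge>2. snowflake_code v1 v2 v3 (Suc n)
              = concat (map (\<lambda>c. [c, 1, 0, 1]) (snowflake_code v1 v2 v3 n)))
     \<and> snowflake_code v1 v2 v3 3 = concat (replicate 6 [1, 1, 0, 1])
     \<and> (\<forall>n\<ge>2. length (snowflake_code v1 v2 v3 n) = 6 * 4 ^ (n - 2))"
  proof -
  have c2: "snowflake_code v1 v2 v3 2 = [1, 1, 1, 1, 1, 1]" by (rule u2[OF tri])
  have rec: "\<forall>n\<ge>2. snowflake_code v1 v2 v3 (Suc n)
              = concat (map (\<lambda>c. [c, 1, 0, 1]) (snowflake_code v1 v2 v3 n))"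
    using urec[OF tri] by blast
  have r6: "replicate 6 x = [x,x,x,x,x,x]" for x :: nat by (simp add: numeral_eq_Suc)
  have c3: "snowflake_code v1 v2 v3 3 = concat (replicate 6 [1, 1, 0, 1])"
    using urec[OF tri, of 2] c2 by (simp add: numeral_eq_Suc)
  show ?thesis
    using partI[OF tri] partII[OF tri] c2 rec c3 by (simp add: snowflake_code_def)
qed

end
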